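(* Let $F,f,k$ be as in the standing assumptions and suppose (A1)–(A5) hold. For $\alpha>0$ let $v^\alpha$ be the viscosity solution of $$\alpha v^\alpha(x,\xi)+F(x,Dv^\alpha(x,\xi),\xi)+\int_I k(\xi,\eta)\big(v^\alpha(x,\xi)-v^\alpha(x,\eta)\big)\,d\eta=f(x,\xi)\quad\text{in }\mathbb{T}^d\times I.$$ Then $v^\alpha(x,\xi)=0$ for all $(x,\xi)\in\mathcal{Z}$ and all $\alpha>0$, where $\tilde{\mathcal{A}}:=\{x\in\mathbb{T}^d: f(x,\xi)=0\text{ for a.e. }\xi\in I\}$ and $\mathcal{Z}:=\{(x,\xi)\in\tilde{\mathcal{A}}\times I: f(x,\xi)=0\}$.
   Context: $I\subset\mathbb{R}$ finite interval with $|I|=1$; $k:I\times I\to\mathbb{R}$ Borel measurable with $0<k_0\le k\le k_1$. $F\in C(\mathbb{T}^d\times\mathbb{R}^d)\otimes\mathcal{B}(I)$ (continuous in $(x,p)$ for each $\xi$, Borel in $\xi$) with $F(\cdot,p,\cdot)$ bounded for each $p$; $f\in C(\mathbb{T}^d)\otimes\mathcal{B}(I)$ bounded. The equation is understood in the viscosity sense (test functions $\phi\in C^1(\mathbb{T}^d)$ touching $v(\cdot,\xi)$ for fixed $\xi$), and has a unique viscosity solution $v^\alpha\in C(\mathbb{T}^d)\otimes\mathcal{B}(I)$. Assumptions: (A1) $C_1|p|^m-C_2\le F(x,p,\xi)$ for constants $C_1,C_2>0$, $m>1$. (A2) $f\ge0$ and $\mathcal{A}:=\{x: f(x,\xi)=0\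 \forall\xi\in I\}\neq\emptyset$. (A3) $p\mapsto F(x,p,\xi)$ convex. (A4) $F\ge0$ and $F(x,0,\xi)=0$. (A5) a modulus $\omega$ with $|f(x,\xi)-f(y,\xi)|\le\omega(|x-y|)$, and for each $R>0$ a modulus $\omega_R$ with $|F(x,p,\xi)-F(y,q,\xi)|\le\omega_R(|x-y|+|p-q|)$ for $p,q\in B(0,R)$, uniformly in $\xi$. *)

theory Defs
  imports "HOL-Analysis.Analysis"
begin

text \<open>Functions on the torus T^d = R^d / Z^d are represented as Z^d-periodic
functions on real^'d.\<close>
definition zd_periodic :: "(real^'d \<Rightarrow> 'b) \<Rightarrow> bool" where
  "zd_periodic g \<longleftrightarrow> (\<forall>x i. g (x + axis i 1) = g x)"

definition modulus :: "(real \<Rightarrow> real) \<Rightarrow> bool" where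
  "modulus \<omega> \<longleftrightarrow> (\<forall>r\<ge>0. \<omega> r \<ge> 0) \<and> mono_on {0..} \<omega> \<and> \<omega> 0 = 0
      \<and> (\<omega> \<longlongrightarrow> 0) (at_right 0)"

definition C1_test :: "(real^'d \<Rightarrow> real) \<Rightarrow> (real^'d \<Rightarrow> real^'d) \<Rightarrow> bool" where
  "C1_test \<phi> D\<phi> \<longleftrightarrow> zd_periodic \<phi> \<and> continuous_on UNIV D\<phi> \<and>
      (\<forall>x. (\<phi> has_derivative (\<lambda>h. D\<phi> x \<bullet> h)) (at x))"

definition nl_op ::
  "real \<Rightarrow> (real^'d \<Rightarrow> real^'d \<Rightarrow> real \<Rightarrow> real) \<Rightarrow> (real \<Rightarrow> real \<Rightarrow> real) \<Rightarrow> real set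
    \<Rightarrow> (real^'d \<Rightarrow> real \<Rightarrow> real) \<Rightarrow> real^'d \<Rightarrow> real \<Rightarrow> real^'d \<Rightarrow> real" where
  "nl_op \<alpha> F k I v x \<xi> p =
     \<alpha> * v x \<xi> + F x p \<xi> + (LINT \<eta>:I|lborel. k \<xi> \<eta> * (v x \<xi> - v x \<eta>))"

definition visc_subsol where
  "visc_subsol \<alpha> F k f I v \<longleftrightarrow>
    (\<forall>\<xi>\<in>I. \<forall>\<phi> D\<phi> x0. C1_test \<phi> D\<phi> \<and>
        (\<exists>e>0. \<forall>y\<in>ball x0 e. v y \<xi> - \<phi> y \<le> v x0 \<xi> - \<phi> x0)
        \<longrightarrow> nl_op \<alpha> F k I v x0 \<xi> (D\<phi> x0) \<le> f x0 \<xi>)"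

definition visc_supersol where
  "visc_supersol \<alpha> F k f I v \<longleftrightarrow>
    (\<forall>\<xi>\<in>I. \<forall>\<phi> D\<phi> x0. C1_test \<phi> D\<phi> \<and>
        (\<exists>e>0. \<forall>y\<in>ball x0 e. v y \<xi> - \<phi> y \<ge> v x0 \<xi> - \<phi> x0)
        \<longrightarrow> nl_op \<alpha> F k I v x0 \<xi> (D\<phi> x0) \<ge> f x0 \<xi>)"

definition visc_sol ::
  "real \<Rightarrow> (real^'d \<Rightarrow> real^'d \<Rightarrow> real \<Rightarrow> real) \<Rightarrow> (real \<Rightarrow> real \<Rightarrow> real)
    \<Rightarrow> (real^'d \<Rightarrow> real \<Rightarrow> real) \<Rightarrow> real set \<Rightarrow> (real^'d \<Rightarrow> real \<Rightarrow> real) \<Rightarrow> bool" where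
  "visc_sol \<alpha> F k f I v \<longleftrightarrow>
     (\<forall>\<xi>\<in>I. continuous_on UNIV (\<lambda>x. v x \<xi>) \<and> zd_periodic (\<lambda>x. v x \<xi>)) \<and>
     (\<forall>x. set_borel_measurable lborel I (\<lambda>\<xi>. v x \<xi>)) \<and>
     (\<exists>B. \<forall>x. \<forall>\<xi>\<in>I. \<bar>v x \<xi>\<bar> \<le> B) \<and>
     visc_subsol \<alpha> F k f I v \<and> visc_supersol \<alpha> F k f I v"

end

theory Submission
  imports Defs
begin

lemma sin_half_lb:
  fixes w :: real assumes "0 \<le> w" "w \<le> 1" shows "w/2 \<le> sin w"
proof -
  let ?h = "\<lambda>x. sin x - x/2"
  have d: "\<And>u. \<lbrakk>0 \<le> u; u \<le> w\<rbrakk> \<Longrightarrow> (?h has_real_derivative cos u - 1/2) (at u)"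
    by (auto intro!: derivative_eq_intros)
  have p: "\<And>u. \<lbrakk>0 \<le> u; u \<le> w\<rbrakk> \<Longrightarrow> cos u - 1/2 \<ge> 0"
  proof -
    fix u assume u: "0 \<le> u" "u \<le> w"
    have "1 \<le> pi/3" using pi_gt3 by simp
    hence "cos (pi/3) \<le> cos u" using u assms by (intro cos_monotone_0_pi_le) auto
    thus "cos u - 1/2 \<ge> 0" using cos_60 by simp
  qed
  have "?h 0 \<le> ?h w"
    by (rule DERIV_nonneg_imp_nondecreasing[OF assms(1)]) (use d p in blast)
  thus ?thesis by simp
qed
lemma one_minus_cos_lb:
  fixes t :: real assumes "\<bar>t\<bar> \<le> 1/8" shows "t^2 \<le> 1 - cos (2*pi*t)"
proof -
  have e: "1 - cos (2*pi*t) = 2 * sin (pi*t) ^ 2"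
    using cos_double_sin[of "pi*t"] by (simp add: mult.assoc)
  have b: "\<bar>pi*t\<bar> \<le> 1"
  proof -
    have "pi * \<bar>t\<bar> \<le> 4 * (1/8)" using assms pi_less_4 by (intro mult_mono) auto
    thus ?thesis by (simp add: abs_mult)
  qed
  have c: "\<bar>pi*t\<bar>/2 \<le> \<bar>sin (pi*t)\<bar>"
  proof (cases "pi*t \<ge> 0")
    case True thus ?thesis using sin_half_lb[of "pi*t"] b by auto
  next
    case False thus ?thesis using sin_half_lb[of "-pi*t"] b by auto
  qed
  have c2: "(\<bar>pi*t\<bar>/2)^2 \<le> \<bar>sin (pi*t)\<bar>^2"
    by (rule power_mono[OF c]) simp
  have f: "(\<bar>pi*t\<bar>/2)^2 = pi^2/4 * t^2" by (simp add: power_divide power_mult_distrib)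
  have g: "1 \<le> pi^2/2"
  proof -
    have "3*3 \<le> pi*pi" using pi_gt3 by (intro mult_mono) auto
    thus ?thesis by (simp add: power2_eq_square)
  qed
  have "t^2 \<le> pi^2/2 * t^2" using mult_right_mono[OF g, of "t^2"] by simp
  also have "\<dots> = 2 * (\<bar>pi*t\<bar>/2)^2" using f by simp
  also have "\<dots> \<le> 2 * \<bar>sin (pi*t)\<bar>^2" using c2 by simp
  also have "\<dots> = 1 - cos (2*pi*t)" using e by simp
  finally show ?thesis .
qed
definition psi :: "real \<Rightarrow> real^'d \<Rightarrow> real^'d \<Rightarrow> real" where
  "psi s x y = s * (\<Sum>i\<in>UNIV. 1 - cos (2*pi*(y$i - x$i)))"
definition Dpsi :: "real \<Rightarrow> real^'d \<Rightarrow> real^'d \<Rightarrow> real^'d" where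
  "Dpsi s x y = (\<chi> i. s * (2*pi* sin (2*pi*(y$i - x$i))))"

lemma psi_C1: "C1_test (psi s (x::real^'d)) (Dpsi s x)"
  unfolding C1_test_def
proof (intro conjI allI)
  show "zd_periodic (psi s x)"
    unfolding zd_periodic_def
  proof (intro allI)
    fix y :: "real^'d" and j
    have "\<And>i. cos (2*pi*((y + axis j 1)$i - x$i)) = cos (2*pi*(y$i - x$i))"
    proof -
      fix i show "cos (2*pi*((y + axis j 1)$i - x$i)) = cos (2*pi*(y$i - x$i))"
      proof (cases "i = j")
        case True
        have "2*pi*((y + axis j 1)$i - x$i) = 2*pi*(y$i - x$i) + 2*pi"
          using True by (simp add: algebra_simps)
        thus ?thesis by (simp add: cos_periodic)
      next
        case False
        hence "(y + axis j 1)$i = y$i" by (simp add: axis_def)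
        thus ?thesis by simp
      qed
    qed
    thus "psi s x (y + axis j 1) = psi s x y" by (simp add: psi_def)
  qed
  show "continuous_on UNIV (Dpsi s x)"
    unfolding Dpsi_def by (intro continuous_intros)
  fix y :: "real^'d"
  have "\<And>i. ((\<lambda>y. 1 - cos (2*pi*(y$i - x$i))) has_derivative
            (\<lambda>h. 2*pi* sin (2*pi*(y$i - x$i)) * h$i)) (at y)"
  proof -
    fix i
    have l: "((\<lambda>y::real^'d. y$i) has_derivative (\<lambda>h. h$i)) (at y)"
      by (rule bounded_linear_imp_has_derivative) (rule bounded_linear_vec_nth)
    show "((\<lambda>y. 1 - cos (2*pi*(y$i - x$i))) has_derivative
            (\<lambda>h. 2*pi* sin (2*pi*(y$i - x$i)) * h$i)) (at y)"
      using l by (auto intro!: derivative_eq_intros simp: algebra_simps)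
  qed
  hence "((\<lambda>y. \<Sum>i\<in>UNIV. 1 - cos (2*pi*(y$i - x$i))) has_derivative
            (\<lambda>h. \<Sum>i\<in>UNIV. 2*pi* sin (2*pi*(y$i - x$i)) * h$i)) (at y)"
    by (intro has_derivative_sum) auto
  hence "(psi s x has_derivative (\<lambda>h. s * (\<Sum>i\<in>UNIV. 2*pi* sin (2*pi*(y$i - x$i)) * h$i))) (at y)"
    unfolding psi_def by (intro has_derivative_mult_right)
  moreover have "(\<lambda>h. s * (\<Sum>i\<in>UNIV. 2*pi* sin (2*pi*(y$i - x$i)) * h$i)) = (\<lambda>h. Dpsi s x y \<bullet> h)"
    by (auto simp: Dpsi_def inner_vec_def sum_distrib_left mult.assoc)
  ultimately show "(psi s x has_derivative (\<lambda>h. Dpsi s x y \<bullet> h)) (at y)" by simp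
qed

lemma psi_zero: "psi s (x::real^'d) x = 0" by (simp add: psi_def)

lemma psi_lb:
  fixes x y :: "real^'d"
  assumes "dist y x \<le> 1/8" "s \<ge> 0"
  shows "s * (dist y x)^2 \<le> psi s x y"
proof -
  have "(dist y x)^2 = (y - x) \<bullet> (y - x)"
    by (simp only: dist_norm power2_norm_eq_inner)
  also have "\<dots> = (\<Sum>i\<in>UNIV. (y$i - x$i)^2)"
    by (simp add: inner_vec_def power2_eq_square)
  also have "\<dots> \<le> (\<Sum>i\<in>UNIV. 1 - cos (2*pi*(y$i - x$i)))"
  proof (rule sum_mono)
    fix i
    have "\<bar>(y - x)$i\<bar> \<le> norm (y - x)" by (rule component_le_norm_cart)
    also have "norm (y - x) \<le> 1/8" using assms(1) by (simp only: dist_norm)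
    finally have "\<bar>y$i - x$i\<bar> \<le> 1/8" by simp
    thus "(y$i - x$i)^2 \<le> 1 - cos (2*pi*(y$i - x$i))" by (rule one_minus_cos_lb)
  qed
  finally have "(dist y x)^2 \<le> (\<Sum>i\<in>UNIV. 1 - cos (2*pi*(y$i - x$i)))" .
  hence "s * (dist y x)^2 \<le> s * (\<Sum>i\<in>UNIV. 1 - cos (2*pi*(y$i - x$i)))"
    using assms(2) by (intro mult_left_mono)
  thus ?thesis by (simp only: psi_def)
qed

lemma eps_lemma:
  fixes a b :: real
  assumes "\<And>e. e > 0 \<Longrightarrow> 0 \<le> a + b * e" "b > 0"
  shows "0 \<le> a"
proof (rule ccontr)
  assume "\<not> 0 \<le> a"
  hence "-a/(2*b) > 0" using assms(2) by (simp add: field_simps)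
  from assms(1)[OF this] have "0 \<le> a + b * (-a/(2*b))" .
  also have "b * (-a/(2*b)) = -a/2" using assms(2) by (simp add: field_simps)
  finally show False using \<open>\<not> 0 \<le> a\<close> by simp
qed

lemma psi_cont: "continuous_on UNIV (psi s (x::real^'d))"
  unfolding psi_def by (intro continuous_intros)

lemma penal:
  fixes w :: "real^'d \<Rightarrow> real" and x :: "real^'d"
  assumes "continuous_on UNIV w" "\<forall>y. \<bar>w y\<bar> \<le> B" "\<epsilon> > 0"
  shows "\<exists>s y0 e. dist y0 x < \<epsilon> \<and> e > 0 \<and> (\<forall>y\<in>ball y0 e. w y - psi s x y \<le> w y0 - psi s x y0)"
proof -
  define R where "R = min \<epsilon> (1/8)"
  define t where "t = R/2"
  have R: "R > 0" "R \<le> \<epsilon>" "R \<le> 1/8" using assms(3) by (auto simp: R_def)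
  have t: "t > 0" using R by (simp add: t_def)
  have B0: "B \<ge> 0" using assms(2) by (meson abs_ge_zero order_trans)
  define s where "s = (2*B+1)/t^2"
  have s: "s > 0" using B0 t by (simp add: s_def)
  let ?G = "\<lambda>y. w y - psi s x y"
  have "continuous_on (cball x R) ?G"
    using continuous_on_subset[OF assms(1)] continuous_on_subset[OF psi_cont]
    by (intro continuous_on_diff) auto
  moreover have "cball x R \<noteq> {}" using R by auto
  ultimately obtain y0 where y0: "y0 \<in> cball x R" "\<forall>y\<in>cball x R. ?G y \<le> ?G y0"
    using continuous_attains_sup[OF compact_cball] by blast
  have "?G x \<le> ?G y0" using y0 R by auto
  hence "psi s x y0 \<le> w y0 - w x" by (simp add: psi_zero)
  also have "\<dots> \<le> 2*B" using assms(2) by (smt (verit))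
  finally have p: "psi s x y0 \<le> 2*B" .
  have d8: "dist y0 x \<le> 1/8" using y0(1) R by (simp add: dist_commute)
  have "s * (dist y0 x)^2 \<le> 2*B" using psi_lb[OF d8 less_imp_le[OF s]] p by linarith
  hence "(dist y0 x)^2 \<le> 2*B / s" using s by (simp add: field_simps)
  also have "2*B/s = 2*B*t^2/(2*B+1)" using t B0 by (simp add: s_def)
  also have "\<dots> < t^2" using t B0 by (simp add: field_simps)
  finally have "(dist y0 x)^2 < t^2" .
  hence dt: "dist y0 x < t" using t by (smt (verit) power_mono zero_le_dist)
  have "\<forall>y\<in>ball y0 t. ?G y \<le> ?G y0"
  proof
    fix y assume "y \<in> ball y0 t"
    hence "dist y y0 < t" by (simp add: dist_commute)
    hence "dist y x < R" using dt dist_triangle[of y x y0] by (simp add: t_def)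
    thus "?G y \<le> ?G y0" using y0(2) by (simp add: dist_commute)
  qed
  moreover have "dist y0 x < \<epsilon>" using dt R by (simp add: t_def)
  ultimately show ?thesis using t by blast
qed

lemma per_shift_nat:
  fixes g :: "real^'d \<Rightarrow> 'b"
  assumes "zd_periodic g" shows "g (x + real n *\<^sub>R axis i 1) = g x"
proof (induction n)
  case 0 thus ?case by simp
next
  case (Suc n)
  have "x + real (Suc n) *\<^sub>R axis i 1 = (x + real n *\<^sub>R axis i 1) + axis i 1"
    by (simp add: algebra_simps)
  thus ?case using assms Suc unfolding zd_periodic_def by metis
qed

lemma per_shift_int:
  fixes g :: "real^'d \<Rightarrow> 'b"
  assumes "zd_periodic g" shows "g (x + of_int n *\<^sub>R axis i 1) = g x"
proof -
  obtain m where m: "n = int m \<or> n = - int m"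
    by (rule that[of "nat \<bar>n\<bar>"]) linarith
  thus ?thesis
  proof
    assume "n = int m" thus ?thesis using per_shift_nat[OF assms] by simp
  next
    assume m: "n = - int m"
    have "g ((x - real m *\<^sub>R axis i 1) + real m *\<^sub>R axis i 1) = g (x - real m *\<^sub>R axis i 1)"
      by (rule per_shift_nat[OF assms])
    thus ?thesis using m by simp
  qed
qed

lemma per_vec:
  fixes g :: "real^'d \<Rightarrow> 'b"
  assumes "zd_periodic g" "finite A"
  shows "g (x + (\<chi> i. if i \<in> A then of_int (c i) else 0)) = g x"
  using assms(2)
proof (induction A rule: finite_induct)
  case empty
  have "(\<chi> i. if i \<in> {} then of_int (c i) else 0) = (0::real^'d)" by (simp add: vec_eq_iff)
  thus ?case by simp
next
  case (insert j A)
  have "(\<chi> i. if i \<in> insert j A then of_int (c i) else 0) =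
        (\<chi> i. if i \<in> A then of_int (c i) else 0) + of_int (c j) *\<^sub>R axis j (1::real)"
    using insert(2) by (auto simp: vec_eq_iff axis_def)
  hence "g (x + (\<chi> i. if i \<in> insert j A then of_int (c i) else 0)) =
         g ((x + (\<chi> i. if i \<in> A then of_int (c i) else 0)) + of_int (c j) *\<^sub>R axis j 1)"
    by (simp add: add.assoc)
  also have "\<dots> = g (x + (\<chi> i. if i \<in> A then of_int (c i) else 0))"
    by (rule per_shift_int[OF assms(1)])
  finally show ?case using insert(3) by simp
qed

lemma per_min:
  fixes g :: "real^'d \<Rightarrow> real"
  assumes "continuous_on UNIV g" "zd_periodic g"
  shows "\<exists>x0. \<forall>y. g x0 \<le> g y"
proof -
  have "(0::real^'d) \<in> cbox 0 1" by (simp add: mem_box_cart(2))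
  hence "cbox 0 (1::real^'d) \<noteq> {}" by blast
  then obtain x0 where x0: "x0 \<in> cbox 0 1" "\<forall>z\<in>cbox 0 (1::real^'d). g x0 \<le> g z"
    using continuous_attains_inf[OF compact_cbox _ continuous_on_subset[OF assms(1)]] by blast
  have "\<forall>y. g x0 \<le> g y"
  proof
    fix y :: "real^'d"
    let ?z = "y + (\<chi> i. if i \<in> UNIV then of_int (- \<lfloor>y$i\<rfloor>) else 0)"
    have "g ?z = g y" by (rule per_vec[OF assms(2)]) simp
    moreover have "?z \<in> cbox 0 1"
      unfolding mem_box_cart(2)
    proof
      fix i
      have "?z$i = y$i - of_int \<lfloor>y$i\<rfloor>" by simp
      moreover have "of_int \<lfloor>y$i\<rfloor> \<le> y$i" by (rule of_int_floor_le)
      moreover have "y$i < of_int \<lfloor>y$i\<rfloor> + 1" by (rule real_of_int_floor_add_one_gt)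
      ultimately have "0 \<le> ?z$i" "?z$i \<le> 1" by linarith+
      thus "(0::real^'d)$i \<le> ?z$i \<and> ?z$i \<le> (1::real^'d)$i" by simp
    qed
    ultimately show "g x0 \<le> g y" using x0 by metis
  qed
  thus ?thesis by blast
qed

lemma k_section_meas:
  fixes k :: "real \<Rightarrow> real \<Rightarrow> real"
  assumes "set_borel_measurable lborel (I \<times> I) (\<lambda>(\<xi>, \<eta>). k \<xi> \<eta>)" "\<xi> \<in> I"
  shows "set_borel_measurable lborel I (k \<xi>)"
proof -
  have "(\<lambda>p. indicator (I \<times> I) p *\<^sub>R (case p of (\<xi>, \<eta>) \<Rightarrow> k \<xi> \<eta>)) \<in> borel_measurable (lborel \<Otimes>\<^sub>M lborel)"
    using assms(1) unfolding set_borel_measurable_def lborel_prod .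
  from measurable_Pair2[OF this, of \<xi>]
  have "(\<lambda>\<eta>. indicator (I \<times> I) (\<xi>, \<eta>) *\<^sub>R k \<xi> \<eta>) \<in> borel_measurable lborel" by simp
  moreover have "(\<lambda>\<eta>. indicator (I \<times> I) (\<xi>, \<eta>) *\<^sub>R k \<xi> \<eta>) = (\<lambda>\<eta>. indicator I \<eta> *\<^sub>R k \<xi> \<eta>)"
    using assms(2) by (auto simp: indicator_def)
  ultimately show ?thesis unfolding set_borel_measurable_def by simp
qed

lemma bdd_set_integrable:
  fixes g :: "real \<Rightarrow> real"
  assumes "I \<in> sets lborel" "emeasure lborel I < \<infinity>" "set_borel_measurable lborel I g"
    "\<forall>\<eta>\<in>I. \<bar>g \<eta>\<bar> \<le> K"
  shows "set_integrable lborel I g"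
  unfolding set_integrable_def
proof (rule integrableI_bounded_set[where A=I and B=K])
  show "I \<in> sets lborel" "emeasure lborel I < \<infinity>" by fact+
  show "(\<lambda>x. indicator I x *\<^sub>R g x) \<in> borel_measurable lborel"
    using assms(3) unfolding set_borel_measurable_def .
  show "AE x in lborel. x \<in> I \<longrightarrow> norm (indicator I x *\<^sub>R g x) \<le> K"
    using assms(4) by (auto simp: indicator_def)
  show "AE x in lborel. x \<notin> I \<longrightarrow> indicator I x *\<^sub>R g x = 0"
    by (auto simp: indicator_def)
qed

lemma prod_meas:
  fixes h w :: "real \<Rightarrow> real"
  assumes "set_borel_measurable lborel I h" "set_borel_measurable lborel I w"
  shows "set_borel_measurable lborel I (\<lambda>\<eta>. h \<eta> * (c - w \<eta>))"
proof -
  have "(\<lambda>\<eta>. indicator I \<eta> *\<^sub>R (h \<eta> * (c - w \<eta>))) =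
        (\<lambda>\<eta>. (indicator I \<eta> *\<^sub>R h \<eta>) * (c - indicator I \<eta> *\<^sub>R w \<eta>))"
    by (auto simp: indicator_def)
  moreover have "(\<lambda>\<eta>. (indicator I \<eta> *\<^sub>R h \<eta>) * (c - indicator I \<eta> *\<^sub>R w \<eta>)) \<in> borel_measurable lborel"
    using assms unfolding set_borel_measurable_def
    by (intro borel_measurable_times borel_measurable_diff) auto
  ultimately show ?thesis unfolding set_borel_measurable_def by simp
qed

lemma const_meas:
  assumes "I \<in> sets lborel"
  shows "set_borel_measurable lborel I (\<lambda>_. c::real)"
  unfolding set_borel_measurable_def using assms by simp

theorem proposition4p1:
  fixes F :: "real^'d \<Rightarrow> real^'d \<Rightarrow> real \<Rightarrow> real"
    and f :: "real^'d \<Rightarrow> real \<Rightarrow> real"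
    and k :: "real \<Rightarrow> real \<Rightarrow> real"
    and I :: "real set"
    and k0 k1 C1 C2 m \<alpha> :: real
    and v :: "real^'d \<Rightarrow> real \<Rightarrow> real"
  assumes I_int: "is_interval I" and I_len: "emeasure lborel I = 1"
    and k_meas: "set_borel_measurable lborel (I \<times> I) (\<lambda>(\<xi>, \<eta>). k \<xi> \<eta>)"
    and k_bds: "0 < k0" "\<forall>\<xi>\<in>I. \<forall>\<eta>\<in>I. k0 \<le> k \<xi> \<eta> \<and> k \<xi> \<eta> \<le> k1"
    and F_cont: "\<forall>\<xi>\<in>I. continuous_on UNIV (\<lambda>(x, p). F x p \<xi>)"
    and F_meas: "\<forall>x p. set_borel_measurable lborel I (\<lambda>\<xi>. F x p \<xi>)"
    and F_per: "\<forall>p. \<forall>\<xi>\<in>I. zd_periodic (\<lambda>x. F x p \<xi>)"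
    and F_bdd: "\<forall>p. \<exists>B. \<forall>x. \<forall>\<xi>\<in>I. \<bar>F x p \<xi>\<bar> \<le> B"
    and f_cont: "\<forall>\<xi>\<in>I. continuous_on UNIV (\<lambda>x. f x \<xi>)"
    and f_meas: "\<forall>x. set_borel_measurable lborel I (\<lambda>\<xi>. f x \<xi>)"
    and f_per: "\<forall>\<xi>\<in>I. zd_periodic (\<lambda>x. f x \<xi>)"
    and f_bdd: "\<exists>B. \<forall>x. \<forall>\<xi>\<in>I. \<bar>f x \<xi>\<bar> \<le> B"
    and A1: "C1 > 0" "C2 > 0" "m > 1"
      "\<forall>x p. \<forall>\<xi>\<in>I. C1 * norm p powr m - C2 \<le> F x p \<xi>"
    and A2: "\<forall>x. \<forall>\<xi>\<in>I. f x \<xi> \<ge> 0" "\<exists>x. \<forall>\<xi>\<in>I. f x \<xi> = 0"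
    and A3: "\<forall>x. \<forall>\<xi>\<in>I. convex_on UNIV (\<lambda>p. F x p \<xi>)"
    and A4: "\<forall>x p. \<forall>\<xi>\<in>I. F x p \<xi> \<ge> 0" "\<forall>x. \<forall>\<xi>\<in>I. F x 0 \<xi> = 0"
    and A5: "\<exists>\<omega>. modulus \<omega> \<and> (\<forall>x y. \<forall>\<xi>\<in>I. \<bar>f x \<xi> - f y \<xi>\<bar> \<le> \<omega> (dist x y))"
      "\<forall>R>0. \<exists>\<omega>. modulus \<omega> \<and> (\<forall>x y p q. \<forall>\<xi>\<in>I. p \<in> ball 0 R \<longrightarrow> q \<in> ball 0 R \<longrightarrow>
            \<bar>F x p \<xi> - F y q \<xi>\<bar> \<le> \<omega> (dist x y + dist p q))"
    and alpha_pos: "\<alpha> > 0"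
    and v_sol: "visc_sol \<alpha> F k f I v"
  shows "\<forall>x \<xi>. x \<in> {x. AE \<eta> in lborel. \<eta> \<in> I \<longrightarrow> f x \<eta> = 0} \<and> \<xi> \<in> I \<and> f x \<xi> = 0
            \<longrightarrow> v x \<xi> = 0"
  proof -
  have vcont: "\<forall>\<xi>\<in>I. continuous_on UNIV (\<lambda>x. v x \<xi>)"
    and vmeas: "\<forall>x. set_borel_measurable lborel I (\<lambda>\<xi>. v x \<xi>)"
    and vbdd: "\<exists>B. \<forall>x. \<forall>\<xi>\<in>I. \<bar>v x \<xi>\<bar> \<le> B"
    and vper: "\<forall>\<xi>\<in>I. zd_periodic (\<lambda>x. v x \<xi>)"
    and sub: "visc_subsol \<alpha> F k f I v" and sup: "visc_supersol \<alpha> F k f I v"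
    using v_sol unfolding visc_sol_def by auto
  obtain B where B: "\<forall>x. \<forall>\<xi>\<in>I. \<bar>v x \<xi>\<bar> \<le> B" using vbdd by blast
  have Iset: "I \<in> sets lborel" using real_interval_borel_measurable[OF I_int] by simp
  have Ifin: "emeasure lborel I < \<infinity>" using I_len by simp
  have Imeas: "measure lborel I = 1" using I_len by (simp add: measure_def)
  have Ine: "I \<noteq> {}" using I_len by auto
  then obtain \<xi>I where "\<xi>I \<in> I" by blast
  hence k1pos: "k1 > 0" using k_bds by force
  have kmeas: "\<And>\<xi>. \<xi> \<in> I \<Longrightarrow> set_borel_measurable lborel I (k \<xi>)"
    using k_section_meas[OF k_meas] by blast
  have kb: "\<And>\<xi> \<eta>. \<xi> \<in> I \<Longrightarrow> \<eta> \<in> I \<Longrightarrow> 0 \<le> k \<xi> \<eta> \<and> k \<xi> \<eta> \<le> k1"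
    using k_bds by force
  have integ: "\<And>\<xi> x c. \<xi> \<in> I \<Longrightarrow> set_integrable lborel I (\<lambda>\<eta>. k \<xi> \<eta> * (c - v x \<eta>))"
  proof -
    fix \<xi> x c assume \<xi>: "\<xi> \<in> I"
    show "set_integrable lborel I (\<lambda>\<eta>. k \<xi> \<eta> * (c - v x \<eta>))"
    proof (rule bdd_set_integrable[OF Iset Ifin prod_meas[OF kmeas[OF \<xi>] vmeas[rule_format]]])
      show "\<forall>\<eta>\<in>I. \<bar>k \<xi> \<eta> * (c - v x \<eta>)\<bar> \<le> k1 * (\<bar>c\<bar> + B)"
      proof
        fix \<eta> assume \<eta>: "\<eta> \<in> I"
        have "\<bar>v x \<eta>\<bar> \<le> B" using B \<eta> by blast
        hence "\<bar>c - v x \<eta>\<bar> \<le> \<bar>c\<bar> + B" using abs_triangle_ineq4[of c "v x \<eta>"] by linarith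
        moreover have "\<bar>k \<xi> \<eta>\<bar> \<le> k1" using kb[OF \<xi> \<eta>] by simp
        ultimately show "\<bar>k \<xi> \<eta> * (c - v x \<eta>)\<bar> \<le> k1 * (\<bar>c\<bar> + B)"
          unfolding abs_mult by (intro mult_mono) auto
      qed
    qed
  qed
  have intc: "\<And>c. set_integrable lborel I (\<lambda>_. c::real)"
    by (rule bdd_set_integrable[OF Iset Ifin const_meas[OF Iset], where K="\<bar>c\<bar>" for c]) auto
  have lintc: "\<And>c. (LINT \<eta>:I|lborel. c) = (c::real)"
  proof -
    fix c :: real
    have "emeasure lborel I \<noteq> \<infinity>" using Ifin by simp
    from set_integral_const[OF Iset this, of c] show "(LINT \<eta>:I|lborel. c) = c" using Imeas by simp
  qed

  have vnn: "\<forall>x. \<forall>\<xi>\<in>I. 0 \<le> v x \<xi>"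
  proof -
    define S where "S = {v x \<xi> | x \<xi>. \<xi> \<in> I}"
    have bddS: "bdd_below S"
    proof (rule bdd_belowI[of _ "-B"])
      fix z assume "z \<in> S"
      then obtain x \<xi> where "z = v x \<xi>" "\<xi> \<in> I" unfolding S_def by blast
      moreover have "\<bar>v x \<xi>\<bar> \<le> B" using B \<open>\<xi> \<in> I\<close> by blast
      ultimately show "-B \<le> z" by linarith
    qed
    have neS: "S \<noteq> {}" using \<open>\<xi>I \<in> I\<close> unfolding S_def by blast
    define mm where "mm = Inf S"
    have mmle: "\<And>x \<xi>. \<xi> \<in> I \<Longrightarrow> mm \<le> v x \<xi>"
      unfolding mm_def using bddS by (intro cInf_lower) (auto simp: S_def)
    have key: "\<And>\<epsilon>. \<epsilon> > 0 \<Longrightarrow> 0 \<le> \<alpha> * mm + (k1 + \<alpha>) * \<epsilon>"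
    proof -
      fix \<epsilon> :: real assume \<epsilon>: "\<epsilon> > 0"
      have "Inf S < mm + \<epsilon>" using \<epsilon> by (simp add: mm_def)
      then obtain z where "z \<in> S" "z < mm + \<epsilon>" using cInf_lessD[OF neS] by blast
      then obtain x1 \<xi> where \<xi>: "\<xi> \<in> I" and x1: "v x1 \<xi> < mm + \<epsilon>" unfolding S_def by blast
      obtain x0 where x0: "\<forall>y. v x0 \<xi> \<le> v y \<xi>"
        using per_min[of "\<lambda>x. v x \<xi>"] vcont vper \<xi> by blast
      have c1: "C1_test (\<lambda>_. 0) (\<lambda>_. 0 :: real^'d)"
      proof -
        have "\<forall>x::real^'d. ((\<lambda>_. 0::real) has_derivative (\<lambda>h. (0::real^'d) \<bullet> h)) (at x)"
          by (simp only: inner_zero_left) (rule allI, rule has_derivative_const)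
        moreover have "continuous_on UNIV (\<lambda>_::real^'d. 0::real^'d)" by (rule continuous_on_const)
        ultimately show ?thesis unfolding C1_test_def zd_periodic_def by blast
      qed
      have sp: "\<forall>\<phi> D\<phi> x0. C1_test \<phi> D\<phi> \<and>
        (\<exists>e>0. \<forall>y\<in>ball x0 e. v y \<xi> - \<phi> y \<ge> v x0 \<xi> - \<phi> x0)
        \<longrightarrow> nl_op \<alpha> F k I v x0 \<xi> (D\<phi> x0) \<ge> f x0 \<xi>"
        using sup \<xi> unfolding visc_supersol_def by blast
      have "\<exists>e>0. \<forall>y\<in>ball x0 e. v y \<xi> - (\<lambda>_. 0) y \<ge> v x0 \<xi> - (\<lambda>_. 0::real) x0"
        using x0 by (intro exI[of _ 1]) simp
      with sp c1 have "nl_op \<alpha> F k I v x0 \<xi> ((\<lambda>_. 0 :: real^'d) x0) \<ge> f x0 \<xi>" by blast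
      moreover have "f x0 \<xi> \<ge> 0" "F x0 0 \<xi> = 0" using A2(1) A4(2) \<xi> by auto
      ultimately have "0 \<le> \<alpha> * v x0 \<xi> + (LINT \<eta>:I|lborel. k \<xi> \<eta> * (v x0 \<xi> - v x0 \<eta>))"
        unfolding nl_op_def by linarith
      also have "(LINT \<eta>:I|lborel. k \<xi> \<eta> * (v x0 \<xi> - v x0 \<eta>)) \<le> (LINT \<eta>:I|lborel. k1 * \<epsilon>)"
      proof (rule set_integral_mono[OF integ[OF \<xi>] intc])
        fix \<eta> assume \<eta>: "\<eta> \<in> I"
        have d: "v x0 \<xi> - v x0 \<eta> \<le> \<epsilon>" using x0[rule_format, of x1] x1 mmle[OF \<eta>, of x0] by linarith
        have "k \<xi> \<eta> * (v x0 \<xi> - v x0 \<eta>) \<le> k \<xi> \<eta> * \<epsilon>"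
          using kb[OF \<xi> \<eta>] d by (intro mult_left_mono) auto
        also have "\<dots> \<le> k1 * \<epsilon>" using kb[OF \<xi> \<eta>] \<epsilon> by (intro mult_right_mono) auto
        finally show "k \<xi> \<eta> * (v x0 \<xi> - v x0 \<eta>) \<le> k1 * \<epsilon>" .
      qed
      finally have "0 \<le> \<alpha> * v x0 \<xi> + k1 * \<epsilon>" using lintc by simp
      moreover have "\<alpha> * (v x0 \<xi> - \<epsilon>) \<le> \<alpha> * mm"
      proof (rule mult_left_mono)
        show "v x0 \<xi> - \<epsilon> \<le> mm" using x0[rule_format, of x1] x1 by linarith
      qed (use alpha_pos in simp)
      ultimately show "0 \<le> \<alpha> * mm + (k1 + \<alpha>) * \<epsilon>" by (simp add: algebra_simps)
    qed
    have kpa: "k1 + \<alpha> > 0" using k1pos alpha_pos by linarith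
    have "0 \<le> \<alpha> * mm" using eps_lemma[of "\<alpha> * mm" "k1 + \<alpha>"] key kpa by blast
    hence "0 \<le> mm" using alpha_pos by (simp add: zero_le_mult_iff)
    thus ?thesis using mmle by (meson order_trans)
  qed

  have ineq: "\<And>x \<xi>. \<xi> \<in> I \<Longrightarrow>
      \<alpha> * v x \<xi> + (LINT \<eta>:I|lborel. k \<xi> \<eta> * (v x \<xi> - v x \<eta>)) \<le> f x \<xi>"
  proof -
    fix x :: "real^'d" and \<xi> assume \<xi>: "\<xi> \<in> I"
    have Bx: "\<forall>y. \<bar>v y \<xi>\<bar> \<le> B" using B \<xi> by blast
    have vc: "continuous_on UNIV (\<lambda>y. v y \<xi>)" using vcont \<xi> by blast
    have fc: "continuous_on UNIV (\<lambda>y. f y \<xi>)" using f_cont \<xi> by blast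
    have subx: "\<forall>\<phi> D\<phi> x0. C1_test \<phi> D\<phi> \<and>
        (\<exists>e>0. \<forall>y\<in>ball x0 e. v y \<xi> - \<phi> y \<le> v x0 \<xi> - \<phi> x0)
        \<longrightarrow> nl_op \<alpha> F k I v x0 \<xi> (D\<phi> x0) \<le> f x0 \<xi>"
      using sub \<xi> unfolding visc_subsol_def by blast
    have "\<forall>n. \<exists>y. dist y x < inverse (real (Suc n)) \<and>
        \<alpha> * v y \<xi> + (LINT \<eta>:I|lborel. k \<xi> \<eta> * (v y \<xi> - v y \<eta>)) \<le> f y \<xi>"
    proof
      fix n
      have "inverse (real (Suc n)) > 0" by simp
      from penal[OF vc Bx this, of x] obtain s y0 e where
        y0: "dist y0 x < inverse (real (Suc n))" "e > 0"
          "\<forall>y\<in>ball y0 e. v y \<xi> - psi s x y \<le> v y0 \<xi> - psi s x y0" by blast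
      have "nl_op \<alpha> F k I v y0 \<xi> (Dpsi s x y0) \<le> f y0 \<xi>"
      proof (rule subx[rule_format, of "psi s x" "Dpsi s x" y0])
        show "C1_test (psi s x) (Dpsi s x) \<and>
          (\<exists>e>0. \<forall>y\<in>ball y0 e. v y \<xi> - psi s x y \<le> v y0 \<xi> - psi s x y0)"
          using psi_C1[of s x] y0(2,3) by blast
      qed
      moreover have "F y0 (Dpsi s x y0) \<xi> \<ge> 0" using A4(1) \<xi> by blast
      ultimately have "\<alpha> * v y0 \<xi> + (LINT \<eta>:I|lborel. k \<xi> \<eta> * (v y0 \<xi> - v y0 \<eta>)) \<le> f y0 \<xi>"
        unfolding nl_op_def by linarith
      thus "\<exists>y. dist y x < inverse (real (Suc n)) \<and>
        \<alpha> * v y \<xi> + (LINT \<eta>:I|lborel. k \<xi> \<eta> * (v y \<xi> - v y \<eta>)) \<le> f y \<xi>"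
        using y0(1) by blast
    qed
    from choice[OF this] obtain Y where Yall: "\<forall>n. dist (Y n) x < inverse (real (Suc n)) \<and>
        \<alpha> * v (Y n) \<xi> + (LINT \<eta>:I|lborel. k \<xi> \<eta> * (v (Y n) \<xi> - v (Y n) \<eta>)) \<le> f (Y n) \<xi>" ..
    have Y: "\<And>n. dist (Y n) x < inverse (real (Suc n))"
      "\<And>n. \<alpha> * v (Y n) \<xi> + (LINT \<eta>:I|lborel. k \<xi> \<eta> * (v (Y n) \<xi> - v (Y n) \<eta>)) \<le> f (Y n) \<xi>"
      using Yall by auto
    have "(\<lambda>n. dist (Y n) x) \<longlonglongrightarrow> 0"
    proof (rule tendsto_sandwich[of "\<lambda>_. 0" _ _ "\<lambda>n. inverse (real (Suc n))"])
      show "\<forall>\<^sub>F n in sequentially. 0 \<le> dist (Y n) x" by simp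
      show "\<forall>\<^sub>F n in sequentially. dist (Y n) x \<le> inverse (real (Suc n))"
        using Y(1) by (intro always_eventually allI less_imp_le)
      show "(\<lambda>n. inverse (real (Suc n))) \<longlonglongrightarrow> 0" by (rule LIMSEQ_inverse_real_of_nat)
    qed simp
    hence Yx: "Y \<longlonglongrightarrow> x" by (rule tendsto_dist_iff[THEN iffD2])
    have vY: "\<And>\<eta>. \<eta> \<in> I \<Longrightarrow> (\<lambda>n. v (Y n) \<eta>) \<longlonglongrightarrow> v x \<eta>"
    proof -
      fix \<eta> assume "\<eta> \<in> I"
      hence "continuous_on UNIV (\<lambda>y. v y \<eta>)" using vcont by blast
      hence "isCont (\<lambda>y. v y \<eta>) x" using continuous_on_eq_continuous_at[OF open_UNIV] by blast
      thus "(\<lambda>n. v (Y n) \<eta>) \<longlonglongrightarrow> v x \<eta>" by (rule isCont_tendsto_compose[OF _ Yx])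
    qed
    have fY: "(\<lambda>n. f (Y n) \<xi>) \<longlonglongrightarrow> f x \<xi>"
    proof -
      have "isCont (\<lambda>y. f y \<xi>) x" using fc continuous_on_eq_continuous_at[OF open_UNIV] by blast
      thus ?thesis by (rule isCont_tendsto_compose[OF _ Yx])
    qed
    define sq where "sq = (\<lambda>n \<eta>. indicator I \<eta> *\<^sub>R (k \<xi> \<eta> * (v (Y n) \<xi> - v (Y n) \<eta>)))"
    define sl where "sl = (\<lambda>\<eta>. indicator I \<eta> *\<^sub>R (k \<xi> \<eta> * (v x \<xi> - v x \<eta>)))"
    define wd where "wd = (\<lambda>\<eta>. indicator I \<eta> *\<^sub>R (k1 * (2*B)))"
    have "(\<lambda>n. integral\<^sup>L lborel (sq n)) \<longlonglongrightarrow> integral\<^sup>L lborel sl"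
    proof (rule integral_dominated_convergence[where w=wd])
      show "sl \<in> borel_measurable lborel"
        using prod_meas[OF kmeas[OF \<xi>] vmeas[rule_format]] unfolding set_borel_measurable_def sl_def .
      show "\<And>n. sq n \<in> borel_measurable lborel"
        using prod_meas[OF kmeas[OF \<xi>] vmeas[rule_format]] unfolding set_borel_measurable_def sq_def .
      show "integrable lborel wd" using intc unfolding set_integrable_def wd_def .
      show "AE \<eta> in lborel. (\<lambda>n. sq n \<eta>) \<longlonglongrightarrow> sl \<eta>"
      proof (rule AE_I2)
        fix \<eta> show "(\<lambda>n. sq n \<eta>) \<longlonglongrightarrow> sl \<eta>"
        proof (cases "\<eta> \<in> I")
          case True
          show ?thesis unfolding sq_def sl_def
            by (rule tendsto_scaleR[OF tendsto_const tendsto_mult[OF tendsto_const tendsto_diff[OF vY[OF \<xi>] vY[OF True]]]])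
        next
          case False thus ?thesis unfolding sq_def sl_def by simp
        qed
      qed
      show "\<And>n. AE \<eta> in lborel. norm (sq n \<eta>) \<le> wd \<eta>"
      proof (rule AE_I2)
        fix n \<eta> show "norm (sq n \<eta>) \<le> wd \<eta>"
        proof (cases "\<eta> \<in> I")
          case True
          have "\<bar>v (Y n) \<xi> - v (Y n) \<eta>\<bar> \<le> 2*B"
          proof -
            have "\<bar>v (Y n) \<xi>\<bar> \<le> B" "\<bar>v (Y n) \<eta>\<bar> \<le> B" using B \<xi> True by blast+
            thus ?thesis using abs_triangle_ineq4[of "v (Y n) \<xi>" "v (Y n) \<eta>"] by linarith
          qed
          moreover have "\<bar>k \<xi> \<eta>\<bar> \<le> k1" using kb[OF \<xi> True] by simp
          ultimately have "\<bar>k \<xi> \<eta>\<bar> * \<bar>v (Y n) \<xi> - v (Y n) \<eta>\<bar> \<le> k1 * (2*B)"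
            by (intro mult_mono) auto
          thus ?thesis using True unfolding sq_def wd_def by (simp add: abs_mult)
        next
          case False thus ?thesis unfolding sq_def wd_def by simp
        qed
      qed
    qed
    hence LY: "(\<lambda>n. LINT \<eta>:I|lborel. k \<xi> \<eta> * (v (Y n) \<xi> - v (Y n) \<eta>)) \<longlonglongrightarrow>
               (LINT \<eta>:I|lborel. k \<xi> \<eta> * (v x \<xi> - v x \<eta>))"
      unfolding set_lebesgue_integral_def sq_def sl_def .
    have "(\<lambda>n. \<alpha> * v (Y n) \<xi> + (LINT \<eta>:I|lborel. k \<xi> \<eta> * (v (Y n) \<xi> - v (Y n) \<eta>))) \<longlonglongrightarrow>
          \<alpha> * v x \<xi> + (LINT \<eta>:I|lborel. k \<xi> \<eta> * (v x \<xi> - v x \<eta>))"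
      by (rule tendsto_add[OF tendsto_mult[OF tendsto_const vY[OF \<xi>]] LY])
    thus "\<alpha> * v x \<xi> + (LINT \<eta>:I|lborel. k \<xi> \<eta> * (v x \<xi> - v x \<eta>)) \<le> f x \<xi>"
      by (rule LIMSEQ_le[OF _ fY]) (use Y(2) in blast)
  qed

  show ?thesis
  proof (intro allI impI)
    fix x \<xi> assume H: "x \<in> {x. AE \<eta> in lborel. \<eta> \<in> I \<longrightarrow> f x \<eta> = 0} \<and> \<xi> \<in> I \<and> f x \<xi> = 0"
    hence ae: "AE \<eta> in lborel. \<eta> \<in> I \<longrightarrow> f x \<eta> = 0" and \<xi>: "\<xi> \<in> I" and fx: "f x \<xi> = 0"
      by auto
    define G where "G = {\<eta>\<in>I. f x \<eta> = 0}"
    have \<xi>G: "\<xi> \<in> G" using \<xi> fx by (simp add: G_def)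
    have bddG: "bdd_above (v x ` G)"
    proof (rule bdd_aboveI[of _ B])
      fix z assume "z \<in> v x ` G"
      then obtain \<eta> where "\<eta> \<in> I" "z = v x \<eta>" by (auto simp: G_def)
      moreover have "\<bar>v x \<eta>\<bar> \<le> B" using B \<open>\<eta> \<in> I\<close> by blast
      ultimately show "z \<le> B" by linarith
    qed
    define M where "M = Sup (v x ` G)"
    have vleM: "\<And>\<eta>. \<eta> \<in> G \<Longrightarrow> v x \<eta> \<le> M"
      unfolding M_def using bddG by (intro cSup_upper) auto
    have key: "\<And>\<delta>. \<delta> > 0 \<Longrightarrow> 0 \<le> - (\<alpha> * M) + (k1 + \<alpha>) * \<delta>"
    proof -
      fix \<delta> :: real assume \<delta>: "\<delta> > 0"
      have "M - \<delta> < Sup (v x ` G)" using \<delta> by (simp add: M_def)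
      then obtain z where "z \<in> v x ` G" "M - \<delta> < z"
        using less_cSupD[of "v x ` G"] \<xi>G by blast
      then obtain \<zeta> where \<zeta>G: "\<zeta> \<in> G" and z: "M - \<delta> < v x \<zeta>" by blast
      have \<zeta>: "\<zeta> \<in> I" "f x \<zeta> = 0" using \<zeta>G by (auto simp: G_def)
      have i1: "\<alpha> * v x \<zeta> + (LINT \<eta>:I|lborel. k \<zeta> \<eta> * (v x \<zeta> - v x \<eta>)) \<le> 0"
        using ineq[OF \<zeta>(1), of x] \<zeta>(2) by simp
      have "(LINT \<eta>:I|lborel. - (k1 * \<delta>)) \<le> (LINT \<eta>:I|lborel. k \<zeta> \<eta> * (v x \<zeta> - v x \<eta>))"
      proof (rule set_integral_mono_AE[OF intc integ[OF \<zeta>(1)]])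
        show "AE \<eta>\<in>I in lborel. - (k1 * \<delta>) \<le> k \<zeta> \<eta> * (v x \<zeta> - v x \<eta>)"
          using ae
        proof eventually_elim
          fix \<eta> assume h: "\<eta> \<in> I \<longrightarrow> f x \<eta> = 0"
          show "\<eta> \<in> I \<longrightarrow> - (k1 * \<delta>) \<le> k \<zeta> \<eta> * (v x \<zeta> - v x \<eta>)"
          proof
            assume \<eta>: "\<eta> \<in> I"
            hence "\<eta> \<in> G" using h by (simp add: G_def)
            hence d: "- \<delta> \<le> v x \<zeta> - v x \<eta>" using vleM[of \<eta>] z by linarith
            have "k \<zeta> \<eta> * (- \<delta>) \<le> k \<zeta> \<eta> * (v x \<zeta> - v x \<eta>)"
              using kb[OF \<zeta>(1) \<eta>] d by (intro mult_left_mono) auto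
            moreover have "k1 * (- \<delta>) \<le> k \<zeta> \<eta> * (- \<delta>)"
              using kb[OF \<zeta>(1) \<eta>] \<delta> by (intro mult_right_mono_neg) auto
            ultimately show "- (k1 * \<delta>) \<le> k \<zeta> \<eta> * (v x \<zeta> - v x \<eta>)" by simp
          qed
        qed
      qed
      hence "- (k1 * \<delta>) \<le> (LINT \<eta>:I|lborel. k \<zeta> \<eta> * (v x \<zeta> - v x \<eta>))" using lintc by simp
      hence a1: "\<alpha> * v x \<zeta> \<le> k1 * \<delta>" using i1 by linarith
      have "\<alpha> * M \<le> \<alpha> * (v x \<zeta> + \<delta>)" using z alpha_pos by (intro mult_left_mono) auto
      thus "0 \<le> - (\<alpha> * M) + (k1 + \<alpha>) * \<delta>" using a1 by (simp add: algebra_simps)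
    qed
    have kpa: "k1 + \<alpha> > 0" using k1pos alpha_pos by linarith
    have "0 \<le> - (\<alpha> * M)" using eps_lemma[of "- (\<alpha> * M)" "k1 + \<alpha>"] key kpa by blast
    hence "M \<le> 0" using alpha_pos by (simp add: mult_le_0_iff)
    hence "v x \<xi> \<le> 0" using vleM[OF \<xi>G] by linarith
    moreover have "0 \<le> v x \<xi>" using vnn \<xi> by blast
    ultimately show "v x \<xi> = 0" by linarith
  qed
qed

end
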